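(* Let $G=(V,E)$ be a finite graph with couplings $J_e>0$, $p_e=1-e^{-2J_e}$. Let $\Omega=\{0,1\}^E$, $\Sigma=\{-1,+1\}^V$, $f:\Omega\to2^\Sigma$, $f(\omega)=\{\sigma\in\Sigma\mid\omega_e=0\ \forall e\notin S(\sigma)\}$. For $A\subset V$ with $|A|$ even let $\rho[\omega]\propto\mathbf{1}[\omega\in\mathcal{F}_A]\mathbb{P}_p[\omega]$ and $\gamma[\sigma]\propto1$. Let $\mathscr{P}$ be the probability measure on $\Omega\times\Sigma$ with $\mathscr{P}[\omega,\sigma]\propto\rho[\omega]\gamma[\sigma]\mathbf{1}[\sigma\in f(\omega)]$. Then: (a) The marginal of $\mathscr{P}$ on $\Sigma$ is $\mu^A$ given by $\mu^A[\sigma]\propto\mu[\sigma]\,\mathbb{P}_{S(\sigma),p}[\mathcal{F}_A]$. For each $\omega\in\mathcal{F}_A$, $\mathscr{P}[\cdot\mid\omega]$ is obtained by assigning independent uniform signs to the open clusters of $\omega$. (b) The marginal of $\mathscr{P}$ on $\Omega$ is $\phi_p[\cdot\mid\mathcal{F}_A]$. For each $\sigma$ with $S(\sigma)\in\mathcal{F}_A$, $\mathscr{P}[\cdot\mid\sigma]=\mathbb{P}_{S(\sigma),p}[\cdot\mid\mathcal{F}_A]$.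
   Context: Configurations are identified with sets of open edges; open clusters are the components of $(V,\omega)$, $\kappa(\omega)$ their number (isolated vertices included). $S(\sigma)=\{uv\in E\mid\sigma_u=\sigma_v\}$. $\partial F$ is the set of odd-degree vertices of $(V,F)$; $\mathcal{F}_A=\{\omega\subset E\mid\exists F\subset\omega,\ \partial F=A\}$. $\mathbb{P}_p$ is Bernoulli percolation on $E$ with parameters $(p_e)$; $\mathbb{P}_{H,p}$ is Bernoulli percolation with parameters $p$ on the edges of $H$ and all other edges closed. $\mu[\sigma]\propto\exp(\sum_{uv\in E}J_{uv}\sigma_u\sigma_v)$ is the Ising measure. $\phi_p[\omega]\propto2^{\kappa(\omega)}\prod_{e\in\omega}p_e\prod_{e\notin\omega}(1-p_e)$ is the random-cluster measure with $q=2$. *)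

theory Defs
  imports Complex_Main "HOL-Library.FuncSet"
begin

text \<open>Graph G = (V,E): V a finite vertex set, edges are two-element subsets of V.
  Configurations omega are subsets of E (the open edges); spin configurations are
  extensional functions V -> {-1,+1}.\<close>

definition simple_graph :: "'v set \<Rightarrow> 'v set set \<Rightarrow> bool" where
  "simple_graph V E \<longleftrightarrow> finite V \<and> E \<subseteq> {{u, v} | u v. u \<in> V \<and> v \<in> V \<and> u \<noteq> v}"

definition normalize :: "('a \<Rightarrow> real) \<Rightarrow> 'a set \<Rightarrow> 'a \<Rightarrow> real" where
  "normalize W X x = (if x \<in> X then W x / (\<Sum>y\<in>X. W y) else 0)"

definition spins :: "'v set \<Rightarrow> ('v \<Rightarrow> int) set" where
  "spins V = (V \<rightarrow>\<^sub>E {-1, 1})"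

definition S :: "'v set set \<Rightarrow> ('v \<Rightarrow> int) \<Rightarrow> 'v set set" where
  "S E \<sigma> = {e \<in> E. \<forall>u\<in>e. \<forall>v\<in>e. \<sigma> u = \<sigma> v}"

definition boundary :: "'v set \<Rightarrow> 'v set set \<Rightarrow> 'v set" where
  "boundary V F = {v \<in> V. odd (card {e \<in> F. v \<in> e})}"

definition FA :: "'v set \<Rightarrow> 'v set set \<Rightarrow> 'v set \<Rightarrow> 'v set set set" where
  "FA V E A = {\<omega>. \<omega> \<subseteq> E \<and> (\<exists>F. F \<subseteq> \<omega> \<and> boundary V F = A)}"

text \<open>Bernoulli percolation with parameters p on the edges of H, all other edges closed:
  the probability of the configuration omega. With H = E this is P_p.\<close>
definition perc :: "('v set \<Rightarrow> real) \<Rightarrow> 'v set set \<Rightarrow> 'v set set \<Rightarrow> real" where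
  "perc p H \<omega> = (if \<omega> \<subseteq> H then (\<Prod>e\<in>\<omega>. p e) * (\<Prod>e\<in>H - \<omega>. 1 - p e) else 0)"

definition perc_event :: "('v set \<Rightarrow> real) \<Rightarrow> 'v set set \<Rightarrow> 'v set set set \<Rightarrow> real" where
  "perc_event p H X = (\<Sum>\<omega>\<in>X. perc p H \<omega>)"

definition conn :: "'v set \<Rightarrow> 'v set set \<Rightarrow> ('v \<times> 'v) set" where
  "conn V \<omega> = Id_on V \<union> {(u, v). {u, v} \<in> \<omega>}\<^sup>+"

definition clusters :: "'v set \<Rightarrow> 'v set set \<Rightarrow> 'v set set" where
  "clusters V \<omega> = V // conn V \<omega>"

definition kappa :: "'v set \<Rightarrow> 'v set set \<Rightarrow> nat" where
  "kappa V \<omega> = card (clusters V \<omega>)"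

definition ising :: "'v set \<Rightarrow> 'v set set \<Rightarrow> ('v set \<Rightarrow> real) \<Rightarrow> ('v \<Rightarrow> int) \<Rightarrow> real" where
  "ising V E J = normalize (\<lambda>\<sigma>. exp (\<Sum>e\<in>E. J e * real_of_int (\<Prod>v\<in>e. \<sigma> v))) (spins V)"

definition random_cluster :: "'v set \<Rightarrow> 'v set set \<Rightarrow> ('v set \<Rightarrow> real) \<Rightarrow> 'v set set \<Rightarrow> real" where
  "random_cluster V E p = normalize (\<lambda>\<omega>. 2 ^ kappa V \<omega> * perc p E \<omega>) (Pow E)"

definition f :: "'v set \<Rightarrow> 'v set set \<Rightarrow> 'v set set \<Rightarrow> ('v \<Rightarrow> int) set" where
  "f V E \<omega> = {\<sigma> \<in> spins V. \<forall>e \<in> E - S E \<sigma>. e \<notin> \<omega>}"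

definition rho :: "'v set \<Rightarrow> 'v set set \<Rightarrow> ('v set \<Rightarrow> real) \<Rightarrow> 'v set \<Rightarrow> 'v set set \<Rightarrow> real" where
  "rho V E p A = normalize (\<lambda>\<omega>. (if \<omega> \<in> FA V E A then 1 else 0) * perc p E \<omega>) (Pow E)"

definition gamma :: "'v set \<Rightarrow> ('v \<Rightarrow> int) \<Rightarrow> real" where
  "gamma V = normalize (\<lambda>\<sigma>. 1) (spins V)"

definition joint :: "'v set \<Rightarrow> 'v set set \<Rightarrow> ('v set \<Rightarrow> real) \<Rightarrow> 'v set
    \<Rightarrow> 'v set set \<times> ('v \<Rightarrow> int) \<Rightarrow> real" where
  "joint V E p A = normalize
     (\<lambda>(\<omega>, \<sigma>). rho V E p A \<omega> * gamma V \<sigma> * (if \<sigma> \<in> f V E \<omega> then 1 else 0))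
     (Pow E \<times> spins V)"

definition muA :: "'v set \<Rightarrow> 'v set set \<Rightarrow> ('v set \<Rightarrow> real) \<Rightarrow> ('v set \<Rightarrow> real) \<Rightarrow> 'v set
    \<Rightarrow> ('v \<Rightarrow> int) \<Rightarrow> real" where
  "muA V E J p A = normalize (\<lambda>\<sigma>. ising V E J \<sigma> * perc_event p (S E \<sigma>) (FA V E A)) (spins V)"

text \<open>Law of the spin configuration obtained by giving each open cluster of omega an
  independent uniform sign: push-forward of the uniform measure on sign assignments
  to clusters.\<close>
definition cluster_sign_law :: "'v set \<Rightarrow> 'v set set \<Rightarrow> ('v \<Rightarrow> int) \<Rightarrow> real" where
  "cluster_sign_law V \<omega> \<sigma> =
     (\<Sum>\<tau> \<in> clusters V \<omega> \<rightarrow>\<^sub>E {-1, 1}. (1 / 2) ^ card (clusters V \<omega>) *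
        (if \<sigma> = (\<lambda>v\<in>V. \<tau> (conn V \<omega> `` {v})) then 1 else 0))"

end

theory Submission
  imports Defs
begin

lemma normalize_scale:
  assumes "c \<noteq> 0" "\<And>x. x \<in> X \<Longrightarrow> W1 x = c * W2 x"
  shows "normalize W1 X x = normalize W2 X x"
proof -
  have "sum W1 X = c * sum W2 X" using assms(2) by (simp add: sum_distrib_left)
  then show ?thesis using assms by (auto simp: normalize_def)
qed

lemma sg_finite:
  assumes "simple_graph V E" shows "finite V" "finite E"
proof -
  show fV: "finite V" using assms unfolding simple_graph_def by auto
  have "E \<subseteq> Pow V" using assms unfolding simple_graph_def by auto
  then show "finite E" using fV finite_subset by blast
qed

lemma sg_edge:
  assumes "simple_graph V E" "e \<in> E"
  obtains u v where "e = {u, v}" "u \<in> V" "v \<in> V" "u \<noteq> v"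
  using assms unfolding simple_graph_def by blast

lemma f_char:
  assumes "\<omega> \<subseteq> E"
  shows "\<sigma> \<in> f V E \<omega> \<longleftrightarrow> \<sigma> \<in> spins V \<and> \<omega> \<subseteq> S E \<sigma>"
  using assms unfolding f_def S_def by auto

lemma conn_const:
  assumes "\<omega> \<subseteq> S E \<sigma>" "(u,w) \<in> conn V \<omega>"
  shows "\<sigma> u = \<sigma> w"
proof -
  have step: "\<And>a b. {a, b} \<in> \<omega> \<Longrightarrow> \<sigma> a = \<sigma> b"
    using assms(1) unfolding S_def by auto
  from assms(2) have "(u,w) \<in> Id_on V \<or> (u,w) \<in> {(u, v). {u, v} \<in> \<omega>}\<^sup>+"
    unfolding conn_def by auto
  then show ?thesis
  proof
    assume "(u,w) \<in> Id_on V" then show ?thesis by auto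
  next
    assume "(u,w) \<in> {(u, v). {u, v} \<in> \<omega>}\<^sup>+"
    then show ?thesis by (induct rule: trancl_induct) (auto simp: step)
  qed
qed

lemma conn_equiv:
  assumes sg: "simple_graph V E" and om: "\<omega> \<subseteq> E"
  shows "equiv V (conn V \<omega>)"
proof -
  let ?r = "{(u, v). {u, v} \<in> \<omega>}"
  have rV: "?r \<subseteq> V \<times> V"
  proof
    fix x assume "x \<in> ?r"
    then obtain a b where x: "x = (a,b)" "{a,b} \<in> E" using om by auto
    then obtain u v where "{a,b} = {u,v}" "u \<in> V" "v \<in> V" using sg_edge[OF sg] by metis
    then have "a \<in> V" "b \<in> V" by (metis insertCI insertE singletonD)+
    then show "x \<in> V \<times> V" using x by auto
  qed
  have tV: "?r\<^sup>+ \<subseteq> V \<times> V" using trancl_subset_Sigma[OF rV] .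
  have symr: "sym ?r" by (auto simp: sym_def insert_commute)
  have symt: "sym (?r\<^sup>+)" using sym_trancl[OF symr] .
  show ?thesis unfolding equiv_def refl_on_def conn_def
  proof (intro conjI)
    show "Id_on V \<union> ?r\<^sup>+ \<subseteq> V \<times> V" using tV by auto
    show "\<forall>x\<in>V. (x, x) \<in> Id_on V \<union> ?r\<^sup>+" by auto
    show "sym (Id_on V \<union> ?r\<^sup>+)" using symt unfolding sym_def by auto
    show "trans (Id_on V \<union> ?r\<^sup>+)" unfolding trans_def
      by (auto intro: trancl_trans)
  qed
qed

lemma perc_pos:
  assumes "finite H" "\<forall>e\<in>H. 0 < p e \<and> p e < 1" "\<omega> \<subseteq> H"
  shows "perc p H \<omega> > 0"
proof -
  have fo: "finite \<omega>" using assms finite_subset by blast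
  have "(\<Prod>e\<in>\<omega>. p e) > 0" using assms by (intro prod_pos) auto
  moreover have "(\<Prod>e\<in>H - \<omega>. 1 - p e) > 0" using assms by (intro prod_pos) auto
  ultimately show ?thesis using assms unfolding perc_def by simp
qed

lemma perc_nonneg:
  assumes "\<forall>e\<in>H. 0 \<le> p e \<and> p e \<le> 1"
  shows "perc p H \<omega> \<ge> 0"
proof -
  have "(\<Prod>e\<in>\<omega>. p e) \<ge> 0" if "\<omega> \<subseteq> H" using assms that by (intro prod_nonneg) auto
  moreover have "(\<Prod>e\<in>H - \<omega>. 1 - p e) \<ge> 0" using assms by (intro prod_nonneg) auto
  ultimately show ?thesis unfolding perc_def by simp
qed

lemma perc_factor:
  assumes "finite E" "H \<subseteq> E" "\<omega> \<subseteq> E"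
  shows "perc p E \<omega> * (if \<omega> \<subseteq> H then 1 else 0) = perc p H \<omega> * (\<Prod>e\<in>E - H. 1 - p e)"
proof (cases "\<omega> \<subseteq> H")
  case True
  have "E - \<omega> = (H - \<omega>) \<union> (E - H)" using True assms by auto
  moreover have "finite (H - \<omega>)" "finite (E - H)" "(H - \<omega>) \<inter> (E - H) = {}"
    using assms by (auto intro: finite_subset[of _ E])
  ultimately have "(\<Prod>e\<in>E - \<omega>. 1 - p e) = (\<Prod>e\<in>H - \<omega>. 1 - p e) * (\<Prod>e\<in>E - H. 1 - p e)"
    by (simp add: prod.union_disjoint)
  then show ?thesis using True assms unfolding perc_def by simp
next
  case False
  then show ?thesis unfolding perc_def by simp
qed

lemma ising_weight:
  assumes sg: "simple_graph V E" and p: "\<forall>e\<in>E. p e = 1 - exp (- 2 * J e)" and s: "\<sigma> \<in> spins V"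
  shows "exp (\<Sum>e\<in>E. J e * real_of_int (\<Prod>v\<in>e. \<sigma> v)) = exp (\<Sum>e\<in>E. J e) * (\<Prod>e\<in>E - S E \<sigma>. 1 - p e)"
proof -
  have fin: "finite E" using sg_finite[OF sg] by simp
  have t: "J e * real_of_int (\<Prod>v\<in>e. \<sigma> v) = J e + (if e \<in> S E \<sigma> then 0 else -2 * J e)"
    if e: "e \<in> E" for e
  proof -
    obtain u v where uv: "e = {u, v}" "u \<in> V" "v \<in> V" "u \<noteq> v" using sg_edge[OF sg e] by metis
    have su: "\<sigma> u \<in> {-1, 1}" "\<sigma> v \<in> {-1, 1}" using s uv unfolding spins_def by auto
    have pr: "(\<Prod>v\<in>e. \<sigma> v) = \<sigma> u * \<sigma> v" using uv by simp
    have S: "e \<in> S E \<sigma> \<longleftrightarrow> \<sigma> u = \<sigma> v" using e uv unfolding S_def by auto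
    show ?thesis using su unfolding pr S by auto
  qed
  have "(\<Sum>e\<in>E. J e * real_of_int (\<Prod>v\<in>e. \<sigma> v)) = (\<Sum>e\<in>E. J e + (if e \<in> S E \<sigma> then 0 else -2 * J e))"
    using t by (rule sum.cong[OF refl])
  also have "\<dots> = (\<Sum>e\<in>E. J e) + (\<Sum>e\<in>E. (if e \<in> S E \<sigma> then 0 else -2 * J e))"
    by (simp add: sum.distrib)
  also have "(\<Sum>e\<in>E. (if e \<in> S E \<sigma> then 0 else -2 * J e)) = (\<Sum>e\<in>E - S E \<sigma>. -2 * J e)"
    using fin by (simp add: sum.If_cases Diff_eq)
  finally have "exp (\<Sum>e\<in>E. J e * real_of_int (\<Prod>v\<in>e. \<sigma> v)) = exp (\<Sum>e\<in>E. J e) * exp (\<Sum>e\<in>E - S E \<sigma>. -2 * J e)"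
    by (simp add: exp_add)
  also have "exp (\<Sum>e\<in>E - S E \<sigma>. -2 * J e) = (\<Prod>e\<in>E - S E \<sigma>. 1 - p e)"
    using fin p by (simp add: exp_sum)
  finally show ?thesis .
qed

lemma clusters_lemma:
  assumes sg: "simple_graph V E" and om: "\<omega> \<subseteq> E"
  shows "card (f V E \<omega>) = 2 ^ kappa V \<omega>"
    and "cluster_sign_law V \<omega> \<sigma> = (if \<sigma> \<in> f V E \<omega> then (1/2) ^ kappa V \<omega> else 0)"
proof -
  define R where "R = conn V \<omega>"
  have eq: "equiv V R" unfolding R_def by (rule conn_equiv[OF sg om])
  define C where "C = clusters V \<omega>"
  have C: "C = V // R" unfolding C_def R_def clusters_def by simp
  have finV: "finite V" using sg_finite[OF sg] by simp
  have finC: "finite C" unfolding C using finV eq by (simp add: finite_quotient equiv_def)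
  define T where "T = C \<rightarrow>\<^sub>E ({-1, 1} :: int set)"
  define \<Phi> where "\<Phi> \<tau> = (\<lambda>v\<in>V. \<tau> (R `` {v}))" for \<tau> :: "'a set \<Rightarrow> int"
  have inj: "inj_on \<Phi> T"
  proof
    fix \<tau>1 \<tau>2 assume t1: "\<tau>1 \<in> T" and t2: "\<tau>2 \<in> T" and e: "\<Phi> \<tau>1 = \<Phi> \<tau>2"
    show "\<tau>1 = \<tau>2"
    proof (rule extensionalityI[of _ C])
      show "\<tau>1 \<in> extensional C" using t1 unfolding T_def by (rule PiE_iff[THEN iffD1, THEN conjunct2])
      show "\<tau>2 \<in> extensional C" using t2 unfolding T_def by (rule PiE_iff[THEN iffD1, THEN conjunct2])
      fix X assume "X \<in> C"
      then obtain v where v: "v \<in> V" "X = R `` {v}" unfolding C by (auto elim: quotientE)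
      have "\<Phi> \<tau>1 v = \<Phi> \<tau>2 v" using e by simp
      then show "\<tau>1 X = \<tau>2 X" using v unfolding \<Phi>_def by simp
    qed
  qed
  have img: "\<Phi> ` T = f V E \<omega>"
  proof
    show "\<Phi> ` T \<subseteq> f V E \<omega>"
    proof
      fix \<sigma> assume "\<sigma> \<in> \<Phi> ` T"
      then obtain \<tau> where t: "\<tau> \<in> T" "\<sigma> = \<Phi> \<tau>" by auto
      have sp: "\<sigma> \<in> spins V" unfolding spins_def
      proof
        fix v assume "v \<in> V"
        then have "R `` {v} \<in> C" unfolding C by (rule quotientI)
        then show "\<sigma> v \<in> {-1, 1}" using t \<open>v \<in> V\<close> unfolding T_def \<Phi>_def by auto
      next
        fix v assume "v \<notin> V" then show "\<sigma> v = undefined" using t unfolding \<Phi>_def by simp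
      qed
      have "\<omega> \<subseteq> S E \<sigma>"
      proof
        fix e assume e: "e \<in> \<omega>"
        then have eE: "e \<in> E" using om by auto
        then obtain u v where uv: "e = {u, v}" "u \<in> V" "v \<in> V" using sg_edge[OF sg] by metis
        have "(u, v) \<in> R" unfolding R_def conn_def using e uv by auto
        then have "R `` {u} = R `` {v}" using eq by (simp add: equiv_class_eq_iff)
        then have "\<sigma> u = \<sigma> v" using t uv unfolding \<Phi>_def by simp
        then show "e \<in> S E \<sigma>" unfolding S_def using eE uv by auto
      qed
      then show "\<sigma> \<in> f V E \<omega>" using sp f_char[OF om] by auto
    qed
  next
    show "f V E \<omega> \<subseteq> \<Phi> ` T"
    proof
      fix \<sigma> assume "\<sigma> \<in> f V E \<omega>"
      then have sp: "\<sigma> \<in> spins V" and sub: "\<omega> \<subseteq> S E \<sigma>" using f_char[OF om] by auto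
      define \<tau> where "\<tau> = (\<lambda>X\<in>C. \<sigma> (SOME v. v \<in> X))"
      have some: "\<And>v. v \<in> V \<Longrightarrow> (SOME w. w \<in> R `` {v}) \<in> R `` {v}"
        by (meson eq equiv_class_self someI_ex)
      have "\<tau> \<in> T" unfolding T_def
      proof
        fix X assume "X \<in> C"
        then obtain v where v: "v \<in> V" "X = R `` {v}" unfolding C by (auto elim: quotientE)
        have "(v, SOME w. w \<in> R `` {v}) \<in> R" using some[OF v(1)] by simp
        then have "(SOME w. w \<in> R `` {v}) \<in> V" using eq unfolding equiv_def by auto
        then show "\<tau> X \<in> {-1, 1}" using sp v \<open>X \<in> C\<close> unfolding \<tau>_def spins_def by auto
      next
        fix X assume "X \<notin> C" then show "\<tau> X = undefined" unfolding \<tau>_def by simp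
      qed
      moreover have "\<Phi> \<tau> = \<sigma>"
      proof
        fix v
        show "\<Phi> \<tau> v = \<sigma> v"
        proof (cases "v \<in> V")
          case True
          have "(v, SOME w. w \<in> R `` {v}) \<in> R" using some[OF True] by simp
          then have "\<sigma> v = \<sigma> (SOME w. w \<in> R `` {v})"
            using conn_const[OF sub] unfolding R_def by blast
          moreover have "R `` {v} \<in> C" unfolding C using True by (rule quotientI)
          ultimately show ?thesis using True unfolding \<Phi>_def \<tau>_def by simp
        next
          case False
          then show ?thesis using sp unfolding \<Phi>_def spins_def by auto
        qed
      qed
      ultimately show "\<sigma> \<in> \<Phi> ` T" by auto
    qed
  qed
  have cT: "card T = 2 ^ kappa V \<omega>"
    unfolding T_def kappa_def C_def[symmetric] using finC by (simp add: card_PiE numeral_2_eq_2)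
  show "card (f V E \<omega>) = 2 ^ kappa V \<omega>"
    using img card_image[OF inj] cT by simp
  have "cluster_sign_law V \<omega> \<sigma> = (\<Sum>\<tau>\<in>T. (\<lambda>s. if \<sigma> = s then (1 / 2) ^ kappa V \<omega> else 0) (\<Phi> \<tau>))"
    unfolding cluster_sign_law_def T_def \<Phi>_def C_def R_def kappa_def by (intro sum.cong) auto
  also have "\<dots> = (\<Sum>s\<in>\<Phi> ` T. if \<sigma> = s then (1 / 2) ^ kappa V \<omega> else 0)"
    by (rule sum.reindex[OF inj, symmetric, unfolded comp_def])
  also have "\<dots> = (if \<sigma> \<in> f V E \<omega> then (1/2) ^ kappa V \<omega> else 0)"
  proof -
    have "finite (\<Phi> ` T)" unfolding T_def using finC by (simp add: finite_PiE)
    then show ?thesis unfolding img by (simp add: sum.delta)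
  qed
  finally show "cluster_sign_law V \<omega> \<sigma> = (if \<sigma> \<in> f V E \<omega> then (1/2) ^ kappa V \<omega> else 0)" .
qed

theorem propositionB1:
  fixes V :: "'v set" and E :: "'v set set" and J p :: "'v set \<Rightarrow> real" and A :: "'v set"
  assumes "simple_graph V E"
    and "\<forall>e\<in>E. J e > 0"
    and "\<forall>e\<in>E. p e = 1 - exp (- 2 * J e)"
    and "A \<subseteq> V" and "even (card A)"
  shows
    "(\<forall>\<sigma>\<in>spins V. (\<Sum>\<omega>\<in>Pow E. joint V E p A (\<omega>, \<sigma>)) = muA V E J p A \<sigma>)
   \<and> (\<forall>\<omega>\<in>FA V E A. \<forall>\<sigma>\<in>spins V.
        joint V E p A (\<omega>, \<sigma>) / (\<Sum>\<sigma>'\<in>spins V. joint V E p A (\<omega>, \<sigma>'))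
          = cluster_sign_law V \<omega> \<sigma>)
   \<and> (\<forall>\<omega>\<in>Pow E. (\<Sum>\<sigma>\<in>spins V. joint V E p A (\<omega>, \<sigma>))
          = normalize (\<lambda>\<omega>'. random_cluster V E p \<omega>' * (if \<omega>' \<in> FA V E A then 1 else 0))
              (Pow E) \<omega>)
   \<and> (\<forall>\<sigma>\<in>spins V. S E \<sigma> \<in> FA V E A \<longrightarrow> (\<forall>\<omega>\<in>Pow E.
        joint V E p A (\<omega>, \<sigma>) / (\<Sum>\<omega>'\<in>Pow E. joint V E p A (\<omega>', \<sigma>))
          = perc p (S E \<sigma>) \<omega> * (if \<omega> \<in> FA V E A then 1 else 0)
              / perc_event p (S E \<sigma>) (FA V E A)))"
proof -
  have sg: "simple_graph V E" using assms(1) .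
  have finV: "finite V" and finE: "finite E" using sg_finite[OF sg] by auto
  have pos: "\<forall>e\<in>E. 0 < p e \<and> p e < 1"
  proof
    fix e assume e: "e \<in> E"
    have "J e > 0" using assms(2) e by auto
    then have "exp (- 2 * J e) < 1" "exp (-2 * J e) > 0" by auto
    then show "0 < p e \<and> p e < 1" using assms(3) e by auto
  qed
  have pos': "\<forall>e\<in>H. 0 \<le> p e \<and> p e \<le> 1" if "H \<subseteq> E" for H using pos that by force
  have SsubE: "S E \<sigma> \<subseteq> E" for \<sigma> unfolding S_def by auto
  define FF where "FF = FA V E A"
  have FFsub: "FF \<subseteq> Pow E" unfolding FF_def FA_def by auto
  define Q where "Q \<sigma> = (\<Prod>e\<in>E - S E \<sigma>. 1 - p e)" for \<sigma>
  have Qpos: "Q \<sigma> > 0" for \<sigma> unfolding Q_def using pos by (intro prod_pos) auto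
  define P where "P \<sigma> = perc_event p (S E \<sigma>) FF" for \<sigma>
  define Wr where "Wr \<omega> = (if \<omega> \<in> FF then 1 else 0) * perc p E \<omega>" for \<omega>
  have Wr_nn: "Wr \<omega> \<ge> 0" for \<omega> unfolding Wr_def using perc_nonneg[OF pos'[OF order_refl]] by simp
  define Zr where "Zr = (\<Sum>\<omega>\<in>Pow E. Wr \<omega>)"
  define Ns where "Ns = real (card (spins V))"
  define one where "one = (\<lambda>v\<in>V. (1::int))"
  have one_sp: "one \<in> spins V" unfolding one_def spins_def by auto
  have finS: "finite (spins V)" unfolding spins_def using finV by (simp add: finite_PiE)
  have Ns_pos: "Ns > 0" unfolding Ns_def using finS one_sp card_gt_0_iff by fastforce
  have S_one: "S E one = E"
  proof
    show "E \<subseteq> S E one"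
    proof
      fix e assume e: "e \<in> E"
      then obtain u v where "e = {u, v}" "u \<in> V" "v \<in> V" using sg_edge[OF sg] by metis
      then show "e \<in> S E one" using e unfolding S_def one_def by auto
    qed
  qed (rule SsubE)
  have rho_eq: "\<And>\<omega>. \<omega> \<in> Pow E \<Longrightarrow> rho V E p A \<omega> = Wr \<omega> / Zr"
    unfolding rho_def normalize_def Wr_def Zr_def FF_def by simp
  have gamma_eq: "\<And>\<sigma>. \<sigma> \<in> spins V \<Longrightarrow> gamma V \<sigma> = 1 / Ns"
    unfolding gamma_def normalize_def Ns_def by simp
  define Wj where "Wj \<omega> \<sigma> = Wr \<omega> / (Zr * Ns) * (if \<omega> \<subseteq> S E \<sigma> then 1 else 0)" for \<omega> \<sigma>
  have Wj_nn: "Wj \<omega> \<sigma> \<ge> 0" for \<omega> \<sigma> unfolding Wj_def Zr_def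
    using Wr_nn Ns_pos by (simp add: sum_nonneg)
  define Zj where "Zj = (\<Sum>(\<omega>,\<sigma>)\<in>Pow E \<times> spins V. Wj \<omega> \<sigma>)"
  have Zj1: "Zj = (\<Sum>\<omega>\<in>Pow E. \<Sum>\<sigma>\<in>spins V. Wj \<omega> \<sigma>)"
    unfolding Zj_def by (simp add: sum.cartesian_product)
  have Zj2: "Zj = (\<Sum>\<sigma>\<in>spins V. \<Sum>\<omega>\<in>Pow E. Wj \<omega> \<sigma>)"
    unfolding Zj1 by (rule sum.swap)
  have Wpair: "rho V E p A \<omega> * gamma V \<sigma> * (if \<sigma> \<in> f V E \<omega> then 1 else 0) = Wj \<omega> \<sigma>"
    if "\<omega> \<in> Pow E" "\<sigma> \<in> spins V" for \<omega> \<sigma>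
    using rho_eq[OF that(1)] gamma_eq[OF that(2)] f_char[of \<omega> E \<sigma> V] that unfolding Wj_def by auto
  have joint_eq: "joint V E p A (\<omega>,\<sigma>) = Wj \<omega> \<sigma> / Zj"
    if "\<omega> \<in> Pow E" "\<sigma> \<in> spins V" for \<omega> \<sigma>
  proof -
    have "(\<Sum>x\<in>Pow E \<times> spins V. (\<lambda>(\<omega>, \<sigma>). rho V E p A \<omega> * gamma V \<sigma> * (if \<sigma> \<in> f V E \<omega> then 1 else 0)) x) = Zj"
      unfolding Zj_def by (rule sum.cong[OF refl]) (auto simp: Wpair)
    then show ?thesis unfolding joint_def normalize_def using Wpair[OF that] that by simp
  qed
  have Wj_eq: "Wj \<omega> \<sigma> = (if \<omega> \<in> FF then perc p (S E \<sigma>) \<omega> else 0) * Q \<sigma> / (Zr * Ns)"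
    if "\<omega> \<in> Pow E" for \<omega> \<sigma>
  proof -
    have "perc p E \<omega> * (if \<omega> \<subseteq> S E \<sigma> then 1 else 0) = perc p (S E \<sigma>) \<omega> * Q \<sigma>"
      unfolding Q_def using perc_factor[OF finE SsubE, of \<omega> p \<sigma>] that by auto
    then show ?thesis unfolding Wj_def Wr_def by (auto simp: field_simps)
  qed
  have sumWj_om: "(\<Sum>\<omega>\<in>Pow E. Wj \<omega> \<sigma>) = P \<sigma> * Q \<sigma> / (Zr * Ns)" for \<sigma>
  proof -
    have "(\<Sum>\<omega>\<in>Pow E. Wj \<omega> \<sigma>) = (\<Sum>\<omega>\<in>Pow E. (if \<omega> \<in> FF then perc p (S E \<sigma>) \<omega> else 0)) * Q \<sigma> / (Zr * Ns)"
      by (simp add: Wj_eq sum_distrib_right sum_divide_distrib)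
    also have "(\<Sum>\<omega>\<in>Pow E. (if \<omega> \<in> FF then perc p (S E \<sigma>) \<omega> else 0)) = P \<sigma>"
      unfolding P_def perc_event_def
      using sum.inter_restrict[of "Pow E" "perc p (S E \<sigma>)" FF] finE FFsub
      by (simp add: Int_absorb1)
    finally show ?thesis .
  qed
  have sumWj_sig: "(\<Sum>\<sigma>\<in>spins V. Wj \<omega> \<sigma>) = Wr \<omega> / (Zr * Ns) * 2 ^ kappa V \<omega>"
    if "\<omega> \<in> Pow E" for \<omega>
  proof -
    have om: "\<omega> \<subseteq> E" using that by auto
    have "(\<Sum>\<sigma>\<in>spins V. Wj \<omega> \<sigma>) = Wr \<omega> / (Zr * Ns) * (\<Sum>\<sigma>\<in>spins V. if \<sigma> \<in> f V E \<omega> then 1 else 0)"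
      unfolding Wj_def sum_distrib_left by (rule sum.cong[OF refl]) (auto simp: f_char[OF om])
    also have "(\<Sum>\<sigma>\<in>spins V. if \<sigma> \<in> f V E \<omega> then 1 else (0::real)) = real (card (f V E \<omega>))"
    proof -
      have "f V E \<omega> \<subseteq> spins V" unfolding f_def by auto
      then show ?thesis
        using sum.inter_restrict[of "spins V" "\<lambda>_. (1::real)" "f V E \<omega>"] finS
        by (simp add: Int_absorb1)
    qed
    also have "\<dots> = 2 ^ kappa V \<omega>" using clusters_lemma(1)[OF sg om] by simp
    finally show ?thesis .
  qed
  show ?thesis
  proof (cases "FF = {}")
    case True
    then have Wr0: "Wr \<omega> = 0" for \<omega> unfolding Wr_def by simp
    then have Wj0: "Wj \<omega> \<sigma> = 0" for \<omega> \<sigma> unfolding Wj_def by simp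
    have j0: "joint V E p A (\<omega>, \<sigma>) = 0" if "\<omega> \<in> Pow E" "\<sigma> \<in> spins V" for \<omega> \<sigma>
      using joint_eq[OF that] Wj0 by simp
    have P0: "P \<sigma> = 0" for \<sigma> unfolding P_def perc_event_def using True by simp
    have muA0: "muA V E J p A \<sigma> = 0" for \<sigma>
      unfolding muA_def normalize_def using P0[unfolded P_def FF_def] by simp
    show ?thesis
    proof (intro conjI ballI impI)
      fix \<sigma> assume "\<sigma> \<in> spins V"
      then show "(\<Sum>\<omega>\<in>Pow E. joint V E p A (\<omega>, \<sigma>)) = muA V E J p A \<sigma>"
        using j0 muA0 by simp
    next
      fix \<omega> \<sigma> assume "\<omega> \<in> FA V E A"
      then show "joint V E p A (\<omega>, \<sigma>) / (\<Sum>\<sigma>'\<in>spins V. joint V E p A (\<omega>, \<sigma>')) = cluster_sign_law V \<omega> \<sigma>"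
        using True FF_def by simp
    next
      fix \<omega> :: "'v set set" assume "\<omega> \<in> Pow E"
      then show "(\<Sum>\<sigma>\<in>spins V. joint V E p A (\<omega>, \<sigma>))
          = normalize (\<lambda>\<omega>'. random_cluster V E p \<omega>' * (if \<omega>' \<in> FA V E A then 1 else 0)) (Pow E) \<omega>"
        using j0 True unfolding FF_def normalize_def by simp
    next
      fix \<sigma> \<omega> assume "S E \<sigma> \<in> FA V E A"
      then show "joint V E p A (\<omega>, \<sigma>) / (\<Sum>\<omega>'\<in>Pow E. joint V E p A (\<omega>', \<sigma>))
          = perc p (S E \<sigma>) \<omega> * (if \<omega> \<in> FA V E A then 1 else 0) / perc_event p (S E \<sigma>) (FA V E A)"
        using True FF_def by simp
    qed
  next
    case False
    then obtain \<omega>0 where w0: "\<omega>0 \<in> FF" by auto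
    then have w0E: "\<omega>0 \<subseteq> E" using FFsub by auto
    have Wr0: "Wr \<omega>0 > 0" unfolding Wr_def using w0 perc_pos[OF finE pos w0E] by simp
    have Zr_pos: "Zr > 0"
    proof -
      have "Wr \<omega>0 \<le> Zr" unfolding Zr_def using w0E finE Wr_nn
        by (intro member_le_sum) auto
      then show ?thesis using Wr0 by simp
    qed
    have Zj_pos: "Zj > 0"
    proof -
      have "Wj \<omega>0 one > 0" unfolding Wj_def S_one using w0E Wr0 Zr_pos Ns_pos by simp
      moreover have "Wj \<omega>0 one \<le> (\<Sum>\<omega>\<in>Pow E. Wj \<omega> one)"
        using w0E finE Wj_nn by (intro member_le_sum) auto
      moreover have "(\<Sum>\<omega>\<in>Pow E. Wj \<omega> one) \<le> Zj"
        unfolding Zj2 using one_sp finS Wj_nn by (intro member_le_sum) (auto intro: sum_nonneg)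
      ultimately show ?thesis by linarith
    qed
    have c0: "Zr * Ns \<noteq> 0" using Zr_pos Ns_pos by simp
    show ?thesis
    proof (intro conjI ballI impI)
      fix \<sigma> assume s: "\<sigma> \<in> spins V"
      have "(\<Sum>\<omega>\<in>Pow E. joint V E p A (\<omega>, \<sigma>)) = (\<Sum>\<omega>\<in>Pow E. Wj \<omega> \<sigma>) / Zj"
        using joint_eq s by (simp add: sum_divide_distrib)
      also have "\<dots> = (P \<sigma> * Q \<sigma>) / (\<Sum>\<sigma>\<in>spins V. P \<sigma> * Q \<sigma>)"
        unfolding Zj2 sumWj_om using c0 by (simp add: sum_divide_distrib[symmetric])
      also have "\<dots> = muA V E J p A \<sigma>"
      proof -
        define Zi where "Zi = (\<Sum>\<sigma>\<in>spins V. exp (\<Sum>e\<in>E. J e * real_of_int (\<Prod>v\<in>e. \<sigma> v)))"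
        have Zi_pos: "Zi > 0" unfolding Zi_def using finS one_sp by (intro sum_pos) auto
        have "muA V E J p A \<sigma> = normalize (\<lambda>\<sigma>. P \<sigma> * Q \<sigma>) (spins V) \<sigma>"
          unfolding muA_def
        proof (rule normalize_scale[where c = "exp (\<Sum>e\<in>E. J e) / Zi"])
          show "exp (\<Sum>e\<in>E. J e) / Zi \<noteq> 0" using Zi_pos by simp
          fix x assume x: "x \<in> spins V"
          have "ising V E J x = exp (\<Sum>e\<in>E. J e) * Q x / Zi"
            unfolding ising_def normalize_def Zi_def[symmetric] Q_def
            using x ising_weight[OF sg assms(3) x] by simp
          then show "ising V E J x * perc_event p (S E x) (FA V E A) = exp (\<Sum>e\<in>E. J e) / Zi * (P x * Q x)"
            unfolding P_def FF_def by simp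
        qed
        then show ?thesis unfolding normalize_def using s by simp
      qed
      finally show "(\<Sum>\<omega>\<in>Pow E. joint V E p A (\<omega>, \<sigma>)) = muA V E J p A \<sigma>" .
    next
      fix \<omega> \<sigma> assume w: "\<omega> \<in> FA V E A" and s: "\<sigma> \<in> spins V"
      have wP: "\<omega> \<in> Pow E" using w FFsub FF_def by auto
      have om: "\<omega> \<subseteq> E" using wP by auto
      have Wrp: "Wr \<omega> > 0" unfolding Wr_def using w FF_def perc_pos[OF finE pos om] by simp
      have "joint V E p A (\<omega>, \<sigma>) / (\<Sum>\<sigma>'\<in>spins V. joint V E p A (\<omega>, \<sigma>'))
          = (Wj \<omega> \<sigma> / Zj) / ((\<Sum>\<sigma>'\<in>spins V. Wj \<omega> \<sigma>') / Zj)"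
        using joint_eq[OF wP] s by (simp add: sum_divide_distrib)
      also have "\<dots> = Wj \<omega> \<sigma> / (Wr \<omega> / (Zr * Ns) * 2 ^ kappa V \<omega>)"
        using Zj_pos sumWj_sig[OF wP] by simp
      also have "\<dots> = (if \<sigma> \<in> f V E \<omega> then (1/2) ^ kappa V \<omega> else 0)"
        unfolding Wj_def using f_char[OF om, of \<sigma> V] s Wrp c0 by (simp add: power_one_over)
      also have "\<dots> = cluster_sign_law V \<omega> \<sigma>" using clusters_lemma(2)[OF sg om] by simp
      finally show "joint V E p A (\<omega>, \<sigma>) / (\<Sum>\<sigma>'\<in>spins V. joint V E p A (\<omega>, \<sigma>')) = cluster_sign_law V \<omega> \<sigma>" .
    next
      fix \<omega> :: "'v set set" assume wP: "\<omega> \<in> Pow E"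
      define G where "G \<omega> = Wr \<omega> * 2 ^ kappa V \<omega>" for \<omega>
      have "(\<Sum>\<sigma>\<in>spins V. joint V E p A (\<omega>, \<sigma>)) = (\<Sum>\<sigma>\<in>spins V. Wj \<omega> \<sigma>) / Zj"
        using joint_eq[OF wP] by (simp add: sum_divide_distrib)
      also have "\<dots> = G \<omega> / (\<Sum>\<omega>'\<in>Pow E. G \<omega>')"
      proof -
        have "Zj = (\<Sum>\<omega>'\<in>Pow E. G \<omega>') / (Zr * Ns)"
          unfolding Zj1 G_def by (simp add: sumWj_sig sum_divide_distrib)
        then show ?thesis using sumWj_sig[OF wP] c0 unfolding G_def by simp
      qed
      also have "\<dots> = normalize (\<lambda>\<omega>'. random_cluster V E p \<omega>' * (if \<omega>' \<in> FA V E A then 1 else 0)) (Pow E) \<omega>"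
      proof -
        define Zc where "Zc = (\<Sum>\<omega>\<in>Pow E. 2 ^ kappa V \<omega> * perc p E \<omega>)"
        have Zc_pos: "Zc > 0" unfolding Zc_def using finE perc_pos[OF finE pos]
          by (intro sum_pos) auto
        have "normalize (\<lambda>\<omega>'. random_cluster V E p \<omega>' * (if \<omega>' \<in> FA V E A then 1 else 0)) (Pow E) \<omega>
            = normalize G (Pow E) \<omega>"
        proof (rule normalize_scale[where c = "1 / Zc"])
          show "1 / Zc \<noteq> 0" using Zc_pos by simp
          fix x assume "x \<in> Pow E"
          then show "random_cluster V E p x * (if x \<in> FA V E A then 1 else 0) = 1 / Zc * G x"
            unfolding random_cluster_def normalize_def Zc_def[symmetric] G_def Wr_def FF_def by simp
        qed
        then show ?thesis unfolding normalize_def using wP by simp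
      qed
      finally show "(\<Sum>\<sigma>\<in>spins V. joint V E p A (\<omega>, \<sigma>))
          = normalize (\<lambda>\<omega>'. random_cluster V E p \<omega>' * (if \<omega>' \<in> FA V E A then 1 else 0)) (Pow E) \<omega>" .
    next
      fix \<sigma> \<omega> assume s: "\<sigma> \<in> spins V" and SF: "S E \<sigma> \<in> FA V E A" and wP: "\<omega> \<in> Pow E"
      have "joint V E p A (\<omega>, \<sigma>) / (\<Sum>\<omega>'\<in>Pow E. joint V E p A (\<omega>', \<sigma>))
          = (Wj \<omega> \<sigma> / Zj) / ((\<Sum>\<omega>'\<in>Pow E. Wj \<omega>' \<sigma>) / Zj)"
        using joint_eq[OF wP s] joint_eq[OF _ s] by (simp add: sum_divide_distrib)
      also have "\<dots> = Wj \<omega> \<sigma> / (\<Sum>\<omega>'\<in>Pow E. Wj \<omega>' \<sigma>)" using Zj_pos by simp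
      also have "\<dots> = perc p (S E \<sigma>) \<omega> * (if \<omega> \<in> FA V E A then 1 else 0) / perc_event p (S E \<sigma>) (FA V E A)"
        unfolding sumWj_om Wj_eq[OF wP] P_def FF_def using c0 Qpos[of \<sigma>] by simp
      finally show "joint V E p A (\<omega>, \<sigma>) / (\<Sum>\<omega>'\<in>Pow E. joint V E p A (\<omega>', \<sigma>))
          = perc p (S E \<sigma>) \<omega> * (if \<omega> \<in> FA V E A then 1 else 0) / perc_event p (S E \<sigma>) (FA V E A)" .
    qed
  qed
qed

end
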